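(* Let $p$ be a prime and $\chi$ a primitive Dirichlet character modulo $p^m$ ($m\ge1$). Then for all integers $n\ge m$ and $k\ge0$, $$S_k(p^n,\chi)\equiv0\pmod{p^{n-1}}.$$ Furthermore, when $p=2$: if $m\ge3$, or $m=2$ and $k$ is even, or $m=1$ and $k$ is odd, then for all $n\ge\max\{m,2\}$, $$S_k(2^n,\chi)\equiv0\pmod{2^n}.$$
   Context: $S_k(N,\chi)=\sum_{j=1}^N\chi(j)j^k$. Values lie in the ring of algebraic integers of the cyclotomic field generated by the values of $\chi$, where congruences are taken. *)

theory Defs
  imports "HOL-Computational_Algebra.Polynomial" "HOL-Number_Theory.Cong" Complex_Main
begin

definition algebraic_int :: "complex \<Rightarrow> bool" where
  "algebraic_int x \<longleftrightarrow>
     (\<exists>q :: int poly. lead_coeff q = 1 \<and> poly (map_poly of_int q) x = 0)"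

text \<open>Congruence x = 0 mod d in the ring of algebraic integers
  (for x in a number field this is divisibility in its ring of integers).\<close>
definition alg_cong0 :: "complex \<Rightarrow> nat \<Rightarrow> bool" where
  "alg_cong0 x d \<longleftrightarrow> algebraic_int (x / of_nat d)"

definition dirichlet_char :: "nat \<Rightarrow> (nat \<Rightarrow> complex) \<Rightarrow> bool" where
  "dirichlet_char N \<chi> \<longleftrightarrow> N > 0 \<and> \<chi> 1 = 1 \<and>
     (\<forall>a b. \<chi> (a * b) = \<chi> a * \<chi> b) \<and>
     (\<forall>a. \<chi> (a + N) = \<chi> a) \<and>
     (\<forall>a. \<chi> a = 0 \<longleftrightarrow> \<not> coprime a N)"

text \<open>Primitive: no induced modulus d properly dividing N (Apostol's definition).\<close>
definition primitive_char :: "nat \<Rightarrow> (nat \<Rightarrow> complex) \<Rightarrow> bool" where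
  "primitive_char N \<chi> \<longleftrightarrow> dirichlet_char N \<chi> \<and>
     \<not> (\<exists>d. d dvd N \<and> d < N \<and>
           (\<forall>a. coprime a N \<and> [a = 1] (mod d) \<longrightarrow> \<chi> a = 1))"

definition char_power_sum :: "nat \<Rightarrow> nat \<Rightarrow> (nat \<Rightarrow> complex) \<Rightarrow> complex" where
  "char_power_sum k N \<chi> = (\<Sum>j = 1..N. \<chi> j * of_nat j ^ k)"

end

theory Submission
  imports Defs "Jordan_Normal_Form.Char_Poly" "HOL-Number_Theory.Number_Theory"
begin

lemma alg_int_span:
  fixes vs :: "nat \<Rightarrow> complex" and n :: nat and x :: complex
  assumes i0: "i0 < n" "vs i0 \<noteq> 0"
    and span: "\<And>i. i < n \<Longrightarrow> \<exists>c::nat\<Rightarrow>int. x * vs i = (\<Sum>j<n. of_int (c j) * vs j)"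
  shows "Defs.algebraic_int x"
proof -
  obtain C where C: "\<And>i. i < n \<Longrightarrow> x * vs i = (\<Sum>j<n. of_int (C i j) * vs j)"
    using span by metis
  define M :: "int mat" where "M = mat n n (\<lambda>(i,j). C i j)"
  define A :: "complex mat" where "A = map_mat of_int M"
  define v where "v = vec n vs"
  have M: "M \<in> carrier_mat n n" by (simp add: M_def)
  have A: "A \<in> carrier_mat n n" by (simp add: A_def M_def)
  have Av: "A *\<^sub>v v = x \<cdot>\<^sub>v v"
  proof (rule eq_vecI)
    fix i assume i: "i < dim_vec (x \<cdot>\<^sub>v v)"
    hence i': "i < n" by (simp add: v_def)
    have "(A *\<^sub>v v) $ i = row A i \<bullet> v" using i' A by simp
    also have "\<dots> = (\<Sum>j<n. of_int (C i j) * vs j)"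
      unfolding scalar_prod_def using i' by (simp add: A_def M_def v_def atLeast0LessThan)
    also have "\<dots> = x * vs i" using C[OF i'] by simp
    finally show "(A *\<^sub>v v) $ i = (x \<cdot>\<^sub>v v) $ i" using i' by (simp add: v_def)
  qed (simp add: A_def M_def v_def)
  have "v \<noteq> 0\<^sub>v n"
  proof
    assume "v = 0\<^sub>v n" hence "v $ i0 = 0" using i0 by simp
    thus False using i0 by (simp add: v_def)
  qed
  hence "eigenvector A v x" unfolding eigenvector_def using Av A by (auto simp: v_def)
  hence "eigenvalue A x" unfolding eigenvalue_def by blast
  hence "poly (char_poly A) x = 0" using eigenvalue_root_char_poly[OF A] by simp
  moreover have "char_poly A = map_poly of_int (char_poly M)"
    unfolding A_def by (rule of_int_hom.char_poly_hom[OF M])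
  moreover have "lead_coeff (char_poly M) = 1" using degree_monic_char_poly[OF M] by simp
  ultimately show ?thesis unfolding Defs.algebraic_int_def by auto
qed

definition inL :: "nat \<Rightarrow> (nat \<Rightarrow> complex) \<Rightarrow> complex \<Rightarrow> bool" where
  "inL N \<chi> y \<longleftrightarrow> (\<exists>c::nat\<Rightarrow>int. y = (\<Sum>j<N. of_int (c j) * \<chi> j))"

definition dL :: "nat \<Rightarrow> (nat \<Rightarrow> complex) \<Rightarrow> nat \<Rightarrow> complex \<Rightarrow> bool" where
  "dL N \<chi> d y \<longleftrightarrow> (\<exists>z. inL N \<chi> z \<and> y = of_nat d * z)"

lemma chi_add_mult:
  assumes "dirichlet_char N \<chi>" shows "\<chi> (b + N * q) = \<chi> b"
proof (induction q)
  case (Suc q)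
  have "b + N * Suc q = (b + N * q) + N" by simp
  thus ?case using assms Suc unfolding dirichlet_char_def by metis
qed simp

lemma chi_mod:
  assumes "dirichlet_char N \<chi>" shows "\<chi> a = \<chi> (a mod N)"
  using chi_add_mult[OF assms, of "a mod N" "a div N"] by simp

lemma chi_cong:
  assumes "dirichlet_char N \<chi>" "[a = b] (mod N)" shows "\<chi> a = \<chi> b"
  using chi_mod[OF assms(1), of a] chi_mod[OF assms(1), of b] assms(2) unfolding cong_def by simp

lemma chi_mult: "dirichlet_char N \<chi> \<Longrightarrow> \<chi> (a * b) = \<chi> a * \<chi> b"
  unfolding dirichlet_char_def by blast

lemma chi_zero_iff: "dirichlet_char N \<chi> \<Longrightarrow> \<chi> a = 0 \<longleftrightarrow> \<not> coprime a N"
  unfolding dirichlet_char_def by blast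

lemma chi_one: "dirichlet_char N \<chi> \<Longrightarrow> \<chi> 1 = 1"
  unfolding dirichlet_char_def by blast

lemma chi_N_pos: "dirichlet_char N \<chi> \<Longrightarrow> N > 0"
  unfolding dirichlet_char_def by blast

lemma inL_0: "inL N \<chi> 0"
  unfolding inL_def by (rule exI[of _ "\<lambda>_. 0"]) simp

lemma inL_add: "inL N \<chi> y \<Longrightarrow> inL N \<chi> z \<Longrightarrow> inL N \<chi> (y + z)"
  unfolding inL_def
proof (elim exE)
  fix c d assume "y = (\<Sum>j<N. of_int (c j) * \<chi> j)" "z = (\<Sum>j<N. of_int (d j) * \<chi> j)"
  thus "\<exists>e. y + z = (\<Sum>j<N. of_int (e j) * \<chi> j)"
    by (intro exI[of _ "\<lambda>j. c j + d j"]) (simp add: sum.distrib distrib_right)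
qed

lemma inL_intmult: "inL N \<chi> y \<Longrightarrow> inL N \<chi> (of_int a * y)"
  unfolding inL_def
proof (elim exE)
  fix c assume "y = (\<Sum>j<N. of_int (c j) * \<chi> j)"
  thus "\<exists>e. of_int a * y = (\<Sum>j<N. of_int (e j) * \<chi> j)"
    by (intro exI[of _ "\<lambda>j. a * c j"]) (simp add: sum_distrib_left mult.assoc)
qed

lemma inL_natmult: "inL N \<chi> y \<Longrightarrow> inL N \<chi> (of_nat a * y)"
  using inL_intmult[of N \<chi> y "int a"] by simp

lemma inL_uminus: "inL N \<chi> y \<Longrightarrow> inL N \<chi> (- y)"
  using inL_intmult[of N \<chi> y "-1"] by simp

lemma inL_diff: "inL N \<chi> y \<Longrightarrow> inL N \<chi> z \<Longrightarrow> inL N \<chi> (y - z)"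
  using inL_add[of N \<chi> y "-z"] inL_uminus[of N \<chi> z] by simp

lemma inL_sum: "(\<And>i. i \<in> A \<Longrightarrow> inL N \<chi> (f i)) \<Longrightarrow> inL N \<chi> (\<Sum>i\<in>A. f i)"
proof (induction A rule: infinite_finite_induct)
  case (infinite A) thus ?case by (simp add: inL_0)
next
  case empty thus ?case by (simp add: inL_0)
next
  case (insert x F) thus ?case by (simp add: inL_add)
qed

lemma inL_chi:
  assumes "dirichlet_char N \<chi>" shows "inL N \<chi> (\<chi> t)"
  unfolding inL_def
proof (rule exI[of _ "\<lambda>j. if j = t mod N then 1 else 0"])
  have "t mod N < N" using chi_N_pos[OF assms] by simp
  hence "(\<Sum>j<N. of_int (if j = t mod N then 1 else 0) * \<chi> j) = \<chi> (t mod N)"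
  proof -
    have "(\<Sum>j<N. of_int (if j = t mod N then 1 else 0) * \<chi> j) = (\<Sum>j<N. if j = t mod N then \<chi> j else 0)"
      by (intro sum.cong) auto
    thus ?thesis using \<open>t mod N < N\<close> by simp
  qed
  thus "\<chi> t = (\<Sum>j<N. of_int (if j = t mod N then 1 else 0) * \<chi> j)"
    using chi_mod[OF assms] by simp
qed

lemma inL_int: "dirichlet_char N \<chi> \<Longrightarrow> inL N \<chi> (of_int a)"
proof -
  assume a: "dirichlet_char N \<chi>"
  have "inL N \<chi> (of_int a * \<chi> 1)" by (rule inL_intmult[OF inL_chi[OF a]])
  thus ?thesis using chi_one[OF a] by simp
qed

lemma inL_mult:
  assumes "dirichlet_char N \<chi>" "inL N \<chi> y" "inL N \<chi> z" shows "inL N \<chi> (y * z)"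
proof -
  obtain c d where c: "y = (\<Sum>j<N. of_int (c j) * \<chi> j)" and d: "z = (\<Sum>j<N. of_int (d j) * \<chi> j)"
    using assms(2,3) unfolding inL_def by blast
  have "y * z = (\<Sum>i<N. \<Sum>j<N. of_int (c i * d j) * \<chi> (i * j))"
    unfolding c d sum_product by (intro sum.cong refl) (simp add: chi_mult[OF assms(1)])
  also have "inL N \<chi> \<dots>"
    by (intro inL_sum inL_intmult inL_chi assms(1))
  finally show ?thesis .
qed

lemma dL_inL: "inL N \<chi> y \<Longrightarrow> dL N \<chi> d (of_nat d * y)"
  unfolding dL_def by blast

lemma dL_0: "dL N \<chi> d 0"
  unfolding dL_def using inL_0 by fastforce

lemma dL_add: "dL N \<chi> d y \<Longrightarrow> dL N \<chi> d z \<Longrightarrow> dL N \<chi> d (y + z)"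
  unfolding dL_def by (metis distrib_left inL_add)

lemma dL_intmult: "dL N \<chi> d y \<Longrightarrow> dL N \<chi> d (of_int a * y)"
  unfolding dL_def by (metis inL_intmult mult.left_commute)

lemma dL_uminus: "dL N \<chi> d y \<Longrightarrow> dL N \<chi> d (- y)"
  using dL_intmult[of N \<chi> d y "-1"] by simp

lemma dL_diff: "dL N \<chi> d y \<Longrightarrow> dL N \<chi> d z \<Longrightarrow> dL N \<chi> d (y - z)"
  using dL_add[of N \<chi> d y "-z"] dL_uminus[of N \<chi> d z] by simp

lemma dL_sum: "(\<And>i. i \<in> A \<Longrightarrow> dL N \<chi> d (f i)) \<Longrightarrow> dL N \<chi> d (\<Sum>i\<in>A. f i)"
proof (induction A rule: infinite_finite_induct)
  case (infinite A) thus ?case by (simp add: dL_0)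
next
  case empty thus ?case by (simp add: dL_0)
next
  case (insert x F) thus ?case by (simp add: dL_add)
qed

lemma dL_mult_inL: "dirichlet_char N \<chi> \<Longrightarrow> dL N \<chi> d y \<Longrightarrow> inL N \<chi> z \<Longrightarrow> dL N \<chi> d (y * z)"
  unfolding dL_def by (metis inL_mult mult.assoc)

lemma dL_scale: "dL N \<chi> d y \<Longrightarrow> dL N \<chi> (e * d) (of_nat e * y)"
  unfolding dL_def by (metis mult.assoc of_nat_mult)

lemma dL_weaken: "dL N \<chi> (d * e) y \<Longrightarrow> dL N \<chi> d y"
  unfolding dL_def by (metis inL_natmult mult.assoc of_nat_mult)

lemma dL_dvd: "d dvd e \<Longrightarrow> dL N \<chi> e y \<Longrightarrow> dL N \<chi> d y"
  by (metis dvdE dL_weaken)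

lemma dL_eq: "dL N \<chi> d y \<Longrightarrow> y = z \<Longrightarrow> dL N \<chi> d z" by simp

lemma inL_alg:
  assumes "dirichlet_char N \<chi>" "N \<ge> 2" "inL N \<chi> y" shows "Defs.algebraic_int y"
proof (rule alg_int_span[of 1 N \<chi>])
  show "1 < N" "\<chi> 1 \<noteq> 0" using assms chi_one[OF assms(1)] by auto
  fix i assume "i < N"
  have "inL N \<chi> (y * \<chi> i)" by (intro inL_mult inL_chi assms)
  thus "\<exists>c::nat\<Rightarrow>int. y * \<chi> i = (\<Sum>j<N. of_int (c j) * \<chi> j)" unfolding inL_def .
qed

lemma sum_lessThan_add_nat: fixes n :: nat shows "(\<Sum>j<m+n. f j) = (\<Sum>j<m. f j) + (\<Sum>r<n. f (m + r))"
  by (induction n) (simp_all add: add.assoc)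

lemma sum_decomp: fixes b :: nat shows "(\<Sum>j<a*b. f j) = (\<Sum>r<a. \<Sum>s<b. f (r + a*s))"
proof (induction b)
  case (Suc b)
  have "(\<Sum>j<a * Suc b. f j) = (\<Sum>j<a*b. f j) + (\<Sum>r<a. f (a*b + r))"
  proof -
    have "a * Suc b = a*b + a" by simp
    thus ?thesis by (simp only: sum_lessThan_add_nat)
  qed
  also have "\<dots> = (\<Sum>r<a. \<Sum>s<Suc b. f (r + a*s))"
    by (simp add: Suc sum.distrib add.commute)
  finally show ?case .
qed simp

lemma zero_sum:
  assumes prim: "primitive_char N \<chi>" and dN: "d dvd N" "d < N" and r: "r < d"
  shows "(\<Sum>s<N div d. \<chi> (r + d*s)) = 0"
proof -
  have dc: "dirichlet_char N \<chi>" using prim unfolding primitive_char_def by blast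
  have N0: "N > 0" using chi_N_pos[OF dc] .
  obtain a where a: "coprime a N" "[a = 1] (mod d)" "\<chi> a \<noteq> 1"
    using prim dN unfolding primitive_char_def by blast
  define q where "q = N div d"
  have Ndq: "N = d * q" using dN(1) unfolding q_def by simp
  have d0: "d > 0" using r by simp
  define A where "A = (\<lambda>s. r + d*s) ` {..<q}"
  have Achar: "x \<in> A \<longleftrightarrow> x < N \<and> x mod d = r" for x
  proof
    assume "x \<in> A"
    then obtain s where s: "s < q" "x = r + d*s" unfolding A_def by blast
    have "r + d*s < d + d*s" using r by simp
    also have "\<dots> = d * Suc s" by simp
    also have "\<dots> \<le> d * q" using s(1) by (intro mult_le_mono2) simp
    finally show "x < N \<and> x mod d = r" using s r Ndq by simp
  next
    assume x: "x < N \<and> x mod d = r"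
    have "x = r + d * (x div d)" using x mod_mult_div_eq[of x d] by simp
    moreover have "x div d < q" using x Ndq d0 by (simp add: less_mult_imp_div_less mult.commute)
    ultimately show "x \<in> A" unfolding A_def by blast
  qed
  have inj: "inj_on (\<lambda>s. r + d*s) {..<q}" using d0 by (auto simp: inj_on_def)
  have S: "(\<Sum>s<q. \<chi> (r + d*s)) = (\<Sum>x\<in>A. \<chi> x)"
    unfolding A_def by (simp add: sum.reindex[OF inj])
  define \<phi> where "\<phi> x = (a * x) mod N" for x
  have phiA: "\<phi> x \<in> A" if "x \<in> A" for x
  proof -
    have "\<phi> x mod d = (a * x) mod d" unfolding \<phi>_def using dN(1) by (simp add: mod_mod_cancel)
    also have "\<dots> = (1 * x) mod d" using cong_mult[OF a(2) cong_refl[of x]] unfolding cong_def .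
    finally show ?thesis using that Achar N0 unfolding \<phi>_def by simp
  qed
  have injphi: "inj_on \<phi> A"
  proof
    fix x y assume xy: "x \<in> A" "y \<in> A" "\<phi> x = \<phi> y"
    hence "[a * x = a * y] (mod N)" unfolding \<phi>_def cong_def by simp
    hence "[x = y] (mod N)" using cong_mult_lcancel_nat[OF a(1)] by blast
    thus "x = y" using xy Achar unfolding cong_def by simp
  qed
  have finA: "finite A" unfolding A_def by simp
  have "\<phi> ` A = A"
    by (rule card_subset_eq[OF finA]) (use phiA card_image[OF injphi] in auto)
  hence "(\<Sum>x\<in>A. \<chi> x) = (\<Sum>x\<in>A. \<chi> (\<phi> x))"
    using sum.reindex[OF injphi, of \<chi>] by simp
  also have "\<dots> = (\<Sum>x\<in>A. \<chi> a * \<chi> x)"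
    unfolding \<phi>_def by (intro sum.cong refl) (simp add: chi_mod[OF dc, symmetric] chi_mult[OF dc])
  also have "\<dots> = \<chi> a * (\<Sum>x\<in>A. \<chi> x)" by (simp add: sum_distrib_left)
  finally have "(\<chi> a - 1) * (\<Sum>x\<in>A. \<chi> x) = 0" by (simp add: algebra_simps)
  hence "(\<Sum>x\<in>A. \<chi> x) = 0" using a(3) by simp
  thus ?thesis using S q_def by simp
qed

definition T :: "(nat \<Rightarrow> complex) \<Rightarrow> nat \<Rightarrow> nat \<Rightarrow> complex" where
  "T \<chi> k M = (\<Sum>j<M. \<chi> j * of_nat j ^ k)"

lemma chi_pdvd:
  assumes "prime p" "m \<ge> 1" "dirichlet_char (p^m) \<chi>" "p dvd x" shows "\<chi> x = 0"
proof -
  have "p dvd p^m" using assms(2) by (simp add: dvd_power)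
  hence "\<not> coprime x (p^m)" using assms(1,4)
    by (meson coprime_common_divisor not_prime_unit)
  thus ?thesis using chi_zero_iff[OF assms(3)] by blast
qed

lemma cps_eq:
  assumes "prime p" "m \<ge> 1" "dirichlet_char (p^m) \<chi>" "n \<ge> 1"
  shows "char_power_sum k (p^n) \<chi> = T \<chi> k (p^n)"
proof -
  let ?g = "\<lambda>j. \<chi> j * of_nat j ^ k"
  have g0: "\<chi> 0 = 0" using chi_pdvd[OF assms(1-3), of 0] by simp
  have gM: "\<chi> (p^n) = 0" using chi_pdvd[OF assms(1-3), of "p^n"] assms(4) by (simp add: dvd_power)
  have "(\<Sum>j=0..p^n. ?g j) = ?g 0 + (\<Sum>j=Suc 0..p^n. ?g j)" by (rule sum.atLeast_Suc_atMost) simp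
  moreover have "(\<Sum>j=0..p^n. ?g j) = (\<Sum>j<p^n. ?g j) + ?g (p^n)"
    by (simp add: atLeast0AtMost lessThan_Suc_atMost[symmetric])
  ultimately show ?thesis unfolding char_power_sum_def T_def using g0 gM by simp
qed

lemma powdiff:
  "\<exists>z::int. (of_nat (r + h*s) :: complex) ^ k - of_nat r ^ k = of_nat h * of_int z"
proof -
  have "[int (r + h*s) = int r] (mod int h)" unfolding cong_def by simp
  hence "[int (r + h*s) ^ k = int r ^ k] (mod int h)" by (rule cong_pow)
  hence "int h dvd int (r + h*s) ^ k - int r ^ k" by (simp add: cong_iff_dvd_diff)
  then obtain z where "int (r + h*s) ^ k - int r ^ k = int h * z" by (elim dvdE)
  hence "(of_int (int (r + h*s) ^ k - int r ^ k) :: complex) = of_int (int h * z)" by simp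
  thus ?thesis by (intro exI[of _ z]) simp
qed

lemma term_dL:
  assumes "dirichlet_char N \<chi>"
  shows "dL N \<chi> h (\<chi> x * ((of_nat (r + h*s) :: complex) ^ k - of_nat r ^ k))"
proof -
  obtain z where z: "(of_nat (r + h*s) :: complex) ^ k - of_nat r ^ k = of_nat h * of_int z"
    using powdiff by blast
  have "inL N \<chi> (of_int z * \<chi> x)" by (intro inL_intmult inL_chi assms)
  hence "dL N \<chi> h (of_nat h * (of_int z * \<chi> x))" by (rule dL_inL)
  thus ?thesis unfolding z by (simp add: algebra_simps)
qed

lemma part1:
  assumes p: "prime p" and m: "m \<ge> 1" and prim: "primitive_char (p^m) \<chi>" and n: "n \<ge> m"
  shows "dL (p^m) \<chi> (p^(n-1)) (T \<chi> k (p^n))"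
  using n
proof (induction n rule: dec_induct)
  case base
  have dc: "dirichlet_char (p^m) \<chi>" using prim unfolding primitive_char_def by blast
  define h where "h = p^(m-1)"
  have pm: "p^m = h * p" unfolding h_def using m by (simp add: power_eq_if)
  have p0: "p > 1" using p prime_gt_1_nat by blast
  have hdvd: "h dvd p^m" and hlt: "h < p^m" using pm p0 h_def by auto
  have pdiv: "p^m div h = p" using pm p0 h_def by simp
  have "T \<chi> k (p^m) = (\<Sum>r<h. \<Sum>s<p. \<chi> (r + h*s) * of_nat (r + h*s) ^ k)"
    unfolding T_def pm by (rule sum_decomp)
  also have "\<dots> = (\<Sum>r<h. of_nat r ^ k * (\<Sum>s<p. \<chi> (r + h*s)))
       + (\<Sum>r<h. \<Sum>s<p. \<chi> (r + h*s) * (of_nat (r + h*s) ^ k - of_nat r ^ k))"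
    by (simp add: sum.distrib[symmetric] sum_distrib_left algebra_simps)
  also have "(\<Sum>r<h. of_nat r ^ k * (\<Sum>s<p. \<chi> (r + h*s))) = 0"
    using zero_sum[OF prim hdvd hlt] pdiv by simp
  finally have eq: "T \<chi> k (p^m) = (\<Sum>r<h. \<Sum>s<p. \<chi> (r + h*s) * (of_nat (r + h*s) ^ k - of_nat r ^ k))"
    by simp
  show ?case unfolding eq h_def by (intro dL_sum term_dL dc)
next
  case (step n)
  have dc: "dirichlet_char (p^m) \<chi>" using prim unfolding primitive_char_def by blast
  define h where "h = p^n"
  have pn: "p^Suc n = h * p" unfolding h_def by simp
  have chih: "\<chi> (r + h*s) = \<chi> r" for r s
  proof -
    have e: "h * s = p^m * (p^(n-m) * s)" unfolding h_def using step(1)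
      by (simp add: power_add[symmetric])
    show ?thesis unfolding e by (rule chi_add_mult[OF dc])
  qed
  have "T \<chi> k (p^Suc n) = (\<Sum>r<h. \<Sum>s<p. \<chi> (r + h*s) * of_nat (r + h*s) ^ k)"
    unfolding T_def pn by (rule sum_decomp)
  also have "\<dots> = of_nat p * T \<chi> k h
       + (\<Sum>r<h. \<Sum>s<p. \<chi> r * (of_nat (r + h*s) ^ k - of_nat r ^ k))"
  proof -
    have "(\<Sum>s<p. \<chi> r * of_nat (r + h*s) ^ k) = of_nat p * (\<chi> r * of_nat r ^ k)
       + (\<Sum>s<p. \<chi> r * (of_nat (r + h*s) ^ k - of_nat r ^ k))" for r
      by (simp add: right_diff_distrib sum_subtractf)
    thus ?thesis unfolding T_def chih by (simp add: sum.distrib sum_distrib_left)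
  qed
  finally have eq: "T \<chi> k (p^Suc n) = \<dots>" .
  have n1: "n \<ge> 1" using step(1) m by simp
  have A: "dL (p^m) \<chi> (p^n) (of_nat p * T \<chi> k h)"
    using dL_scale[OF step(3), of p] n1 unfolding h_def by (simp add: power_eq_if)
  have B: "dL (p^m) \<chi> (p^n) (\<Sum>r<h. \<Sum>s<p. \<chi> r * (of_nat (r + h*s) ^ k - of_nat r ^ k))"
    unfolding h_def by (intro dL_sum term_dL dc)
  show ?case unfolding eq using dL_add[OF A B] by simp
qed

lemma powdiff2:
  "\<exists>q::int. (of_nat (r + h) :: complex) ^ Suc k = of_nat r ^ Suc k
     + of_nat (Suc k) * of_nat h * of_nat r ^ k + (of_nat h)^2 * of_int q"
proof -
  have "\<exists>q::int. (int r + int h) ^ Suc k = int r ^ Suc k + int (Suc k) * int h * int r ^ k + (int h)^2 * q"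
  proof (induction k)
    case 0 show ?case by (intro exI[of _ 0]) simp
  next
    case (Suc k)
    then obtain q where q: "(int r + int h) ^ Suc k = int r ^ Suc k + int (Suc k) * int h * int r ^ k + (int h)^2 * q"
      by blast
    have "(int r + int h) ^ Suc (Suc k) = (int r + int h) * (int r + int h) ^ Suc k" by simp
    also have "\<dots> = int r ^ Suc (Suc k) + int (Suc (Suc k)) * int h * int r ^ Suc k
        + (int h)^2 * (q * int r + int (Suc k) * int r ^ k + int h * q)"
      unfolding q by (simp add: algebra_simps power2_eq_square)
    finally show ?case by blast
  qed
  then obtain q where q: "(int r + int h) ^ Suc k = int r ^ Suc k + int (Suc k) * int h * int r ^ k + (int h)^2 * q"
    by blast
  have "(of_int ((int r + int h) ^ Suc k) :: complex) = of_int (int r ^ Suc k + int (Suc k) * int h * int r ^ k + (int h)^2 * q)"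
    unfolding q ..
  thus ?thesis by (intro exI[of _ q]) simp
qed

lemma chi2_pdvd:
  assumes "m \<ge> 1" "dirichlet_char (2^m) \<chi>" "even x" shows "\<chi> x = 0"
  using chi_pdvd[of 2 m \<chi> x] assms by simp

lemma chi_neg_h:
  assumes prim: "primitive_char (2^m) \<chi>" and m: "m \<ge> 2" and r: "r < 2^(m-1)"
  shows "\<chi> (r + 2^(m-1)) = - \<chi> r"
proof -
  define h :: nat where "h = 2^(m-1)"
  have pm: "(2::nat)^m = h * 2" unfolding h_def using m by (simp add: power_eq_if)
  have "(\<Sum>s<2^m div h. \<chi> (r + h*s)) = 0"
    by (rule zero_sum[OF prim]) (use pm r h_def in auto)
  moreover have "h \<noteq> 0" unfolding h_def by simp
  ultimately have "(\<Sum>s<2. \<chi> (r + h*s)) = 0" using pm by simp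
  hence "\<chi> r + \<chi> (r + h) = 0" by (simp add: numeral_2_eq_2)
  thus ?thesis unfolding h_def by (simp add: eq_neg_iff_add_eq_0 add.commute)
qed

lemma sumchi_half:
  assumes prim: "primitive_char (2^m) \<chi>" and m: "m \<ge> 3"
  shows "dL (2^m) \<chi> 2 (\<Sum>r<2^(m-1). \<chi> r)"
proof -
  have dc: "dirichlet_char (2^m) \<chi>" using prim unfolding primitive_char_def by blast
  define N :: nat where "N = 2^m"
  define h :: nat where "h = 2^(m-1)"
  define g :: nat where "g = 2^(m-2)"
  have hg: "h = g + g"
  proof -
    have "m - 1 = Suc (m - 2)" using m by simp
    thus ?thesis unfolding h_def g_def by simp
  qed
  have Nh: "N = 2 * h" unfolding N_def h_def using m by (simp add: power_eq_if)
  have "(1::nat) < 2^(m-1)" using m by (intro one_less_power) auto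
  hence h1: "\<chi> (1 + h) = -1" using chi_neg_h[OF prim, of 1] m chi_one[OF dc] unfolding h_def
    by (simp add: add.commute)
  define c where "c = - \<chi> (N - 1)"
  have reflc: "\<chi> (h - t) = c * \<chi> t" if t: "t \<le> h" for t
  proof (cases "even t")
    case True
    have "even h" unfolding h_def using m by simp
    hence "even (h - t)" using True t by simp
    thus ?thesis using chi2_pdvd[OF _ dc] True m by simp
  next
    case False
    then obtain u where u: "t = 2*u + 1" using oddE by blast
    have "int ((N - 1) * t * (1 + h)) - int (h - t) = int N * (int u + int h * int t)"
    proof -
      have "h \<ge> 1" unfolding h_def by simp
      hence "N \<ge> 1" "t \<le> h" using Nh t by auto
      hence e1: "int (N - 1) = int N - 1" "int (h - t) = int h - int t" by (simp_all add: of_nat_diff)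
      have "int ((N - 1) * t * (1 + h)) = int (N - 1) * int t * (1 + int h)" by (simp only: of_nat_mult of_nat_add of_nat_1)
      hence "int ((N - 1) * t * (1 + h)) - int (h - t) = (int N - 1) * int t * (1 + int h) - (int h - int t)"
        unfolding e1 by simp
      thus ?thesis unfolding Nh u by (simp add: algebra_simps)
    qed
    hence "[int ((N - 1) * t * (1 + h)) = int (h - t)] (mod int N)"
      by (simp add: cong_iff_dvd_diff)
    hence "[(N - 1) * t * (1 + h) = h - t] (mod N)" by (simp only: cong_int_iff)
    hence "\<chi> (h - t) = \<chi> ((N - 1) * t * (1 + h))" using chi_cong[OF dc[folded N_def]] by (metis cong_sym)
    also have "\<dots> = \<chi> (N - 1) * \<chi> t * \<chi> (1 + h)" by (simp only: chi_mult[OF dc[folded N_def]])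
    also have "\<dots> = c * \<chi> t" using h1 unfolding c_def by simp
    finally show ?thesis .
  qed
  have "(\<Sum>r<g. \<chi> (g - r)) = (\<Sum>r<g. \<chi> (Suc (g - Suc r)))"
  proof (rule sum.cong[OF refl])
    fix r assume "r \<in> {..<g}" hence "g - r = Suc (g - Suc r)" by simp
    thus "\<chi> (g - r) = \<chi> (Suc (g - Suc r))" by simp
  qed
  also have "\<dots> = (\<Sum>r<g. \<chi> (Suc r))" by (rule sum.nat_diff_reindex[where g = "\<lambda>r. \<chi> (Suc r)"])
  also have "\<dots> = (\<Sum>r<Suc g. \<chi> r) - \<chi> 0" by (simp only: sum.lessThan_Suc_shift) simp
  also have "\<dots> = (\<Sum>r<g. \<chi> r)"
    using chi2_pdvd[OF _ dc, of 0] chi2_pdvd[OF _ dc, of g] m unfolding g_def by simp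
  finally have rev: "(\<Sum>r<g. \<chi> (g - r)) = (\<Sum>r<g. \<chi> r)" .
  have "(\<Sum>r<h. \<chi> r) = (\<Sum>r<g. \<chi> r) + (\<Sum>r<g. \<chi> (g + r))"
    unfolding hg by (rule sum_lessThan_add_nat)
  also have "(\<Sum>r<g. \<chi> (g + r)) = (\<Sum>r<g. c * \<chi> (g - r))"
  proof (rule sum.cong[OF refl])
    fix r assume "r \<in> {..<g}"
    hence "g + r = h - (g - r)" "g - r \<le> h" using hg by auto
    thus "\<chi> (g + r) = c * \<chi> (g - r)" using reflc by simp
  qed
  also have "\<dots> = c * (\<Sum>r<g. \<chi> r)" by (simp add: sum_distrib_left[symmetric] rev)
  finally have eq: "(\<Sum>r<h. \<chi> r) = (1 + c) * (\<Sum>r<g. \<chi> r)" by (simp add: algebra_simps)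
  have Y: "inL (2^m) \<chi> (\<Sum>r<g. \<chi> r)" by (intro inL_sum inL_chi dc)
  have "[(N - 1) * (N - 1) = 1] (mod N)"
  proof -
    have "h \<ge> 1" unfolding h_def by simp
    hence "N \<ge> 2" using Nh by simp
    then obtain a where a: "N = a + 2" using le_Suc_ex by (metis add.commute)
    have "(N - 1) * (N - 1) = 1 + N * (N - 2)" unfolding a by (simp add: algebra_simps)
    moreover have "(1 + N * (N - 2)) mod N = 1" using \<open>N \<ge> 2\<close> by (simp add: mod_Suc)
    ultimately show ?thesis unfolding cong_def using \<open>N \<ge> 2\<close> by simp
  qed
  hence "\<chi> (N - 1) * \<chi> (N - 1) = 1"
    using chi_cong[OF dc[folded N_def]] chi_mult[OF dc[folded N_def]] chi_one[OF dc] by metis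
  hence "\<chi> (N - 1) = 1 \<or> \<chi> (N - 1) = -1"
    by (metis power2_eq_1_iff power2_eq_square)
  thus ?thesis
  proof
    assume "\<chi> (N - 1) = 1"
    hence "(\<Sum>r<h. \<chi> r) = 0" using eq c_def by simp
    thus ?thesis unfolding h_def using dL_0 by simp
  next
    assume "\<chi> (N - 1) = -1"
    hence "(\<Sum>r<h. \<chi> r) = of_nat 2 * (\<Sum>r<g. \<chi> r)" using eq c_def by simp
    thus ?thesis unfolding h_def using dL_inL[OF Y, of 2] by simp
  qed
qed

lemma p2diff:
  assumes dc: "dirichlet_char N \<chi>"
  shows "\<exists>Y. inL N \<chi> Y \<and> (\<Sum>r<h. \<chi> r * ((of_nat (r+h)) ^ Suc k - of_nat r ^ Suc k))
           = of_nat (Suc k) * of_nat h * T \<chi> k h + (of_nat h)^2 * Y"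
proof -
  have "\<forall>r. \<exists>q::int. (of_nat (r + h) :: complex) ^ Suc k = of_nat r ^ Suc k
     + of_nat (Suc k) * of_nat h * of_nat r ^ k + (of_nat h)^2 * of_int q"
    using powdiff2 by blast
  then obtain Q where Q: "\<And>r. (of_nat (r + h) :: complex) ^ Suc k = of_nat r ^ Suc k
     + of_nat (Suc k) * of_nat h * of_nat r ^ k + (of_nat h)^2 * of_int (Q r)" by metis
  define Y where "Y = (\<Sum>r<h. of_int (Q r) * \<chi> r)"
  have "inL N \<chi> Y" unfolding Y_def by (intro inL_sum inL_intmult inL_chi dc)
  moreover have "(\<Sum>r<h. \<chi> r * ((of_nat (r+h)) ^ Suc k - of_nat r ^ Suc k))
           = of_nat (Suc k) * of_nat h * T \<chi> k h + (of_nat h)^2 * Y"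
    unfolding Q Y_def T_def by (simp add: sum_distrib_left sum.distrib algebra_simps)
  ultimately show ?thesis by blast
qed

lemma step1:
  assumes m: "m \<ge> 1" and dc: "dirichlet_char (2^m) \<chi>"
  shows "dL (2^m) \<chi> 2 (T \<chi> k h - (\<Sum>r<h. \<chi> r))"
proof -
  have "T \<chi> k h - (\<Sum>r<h. \<chi> r) = (\<Sum>r<h. \<chi> r * (of_nat r ^ k - 1))"
    unfolding T_def by (simp add: sum_subtractf algebra_simps)
  also have "dL (2^m) \<chi> 2 \<dots>"
  proof (rule dL_sum)
    fix r
    show "dL (2^m) \<chi> 2 (\<chi> r * (of_nat r ^ k - 1))"
    proof (cases "even r")
      case True thus ?thesis using chi2_pdvd[OF m dc] dL_0 by simp
    next
      case False
      hence "odd (int r ^ k)" by simp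
      hence "2 dvd (int r ^ k - 1)" by simp
      then obtain z where z: "int r ^ k - 1 = 2 * z" by (elim dvdE)
      have "(of_int (int r ^ k - 1) :: complex) = of_int (2 * z)" unfolding z ..
      hence "(of_nat r ^ k - 1 :: complex) = of_nat 2 * of_int z" by simp
      moreover have "dL (2^m) \<chi> 2 (of_nat 2 * (of_int z * \<chi> r))"
        by (intro dL_inL inL_intmult inL_chi dc)
      ultimately show ?thesis by (simp add: algebra_simps)
    qed
  qed
  finally show ?thesis .
qed

lemma p2_base:
  assumes prim: "primitive_char (2^m) \<chi>" and m: "m \<ge> 2" and k: "even k \<or> m \<ge> 3"
  shows "dL (2^m) \<chi> (2^m) (T \<chi> k (2^m))"
proof -
  have dc: "dirichlet_char (2^m) \<chi>" using prim unfolding primitive_char_def by blast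
  define h :: nat where "h = 2^(m-1)"
  have pm: "(2::nat)^m = h * 2" unfolding h_def using m by (simp add: power_eq_if)
  have "T \<chi> k (2^m) = (\<Sum>r<h. \<Sum>s<2. \<chi> (r + h*s) * of_nat (r + h*s) ^ k)"
    unfolding T_def pm by (rule sum_decomp)
  also have "\<dots> = (\<Sum>r<h. \<chi> r * of_nat r ^ k + \<chi> (r + h) * of_nat (r + h) ^ k)"
    by (simp add: numeral_2_eq_2)
  also have "\<dots> = - (\<Sum>r<h. \<chi> r * ((of_nat (r+h)) ^ k - of_nat r ^ k))"
    unfolding sum_negf[symmetric]
  proof (rule sum.cong[OF refl])
    fix r assume "r \<in> {..<h}"
    hence "\<chi> (r + h) = - \<chi> r" using chi_neg_h[OF prim m] unfolding h_def by simp
    thus "\<chi> r * of_nat r ^ k + \<chi> (r + h) * of_nat (r + h) ^ k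
        = - (\<chi> r * ((of_nat (r+h)) ^ k - of_nat r ^ k))" by (simp add: algebra_simps)
  qed
  finally have eq: "T \<chi> k (2^m) = - (\<Sum>r<h. \<chi> r * ((of_nat (r+h)) ^ k - of_nat r ^ k))" .
  show ?thesis
  proof (cases k)
    case 0 thus ?thesis using eq dL_0 by simp
  next
    case (Suc k')
    obtain Y where Y: "inL (2^m) \<chi> Y" and YE: "(\<Sum>r<h. \<chi> r * ((of_nat (r+h)) ^ Suc k' - of_nat r ^ Suc k'))
           = of_nat (Suc k') * of_nat h * T \<chi> k' h + (of_nat h)^2 * Y"
      using p2diff[OF dc] by blast
    have hh: "(2::nat)^m dvd h^2"
    proof -
      have "h^2 = 2^(2*(m-1))" unfolding h_def by (simp add: power_mult[symmetric] mult.commute)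
      moreover have "m \<le> 2*(m-1)" using m by simp
      ultimately show ?thesis by (simp add: le_imp_power_dvd)
    qed
    have B: "dL (2^m) \<chi> (2^m) ((of_nat h)^2 * Y)"
      using dL_dvd[OF hh dL_inL[OF Y, of "h^2"]] by simp
    have TL: "inL (2^m) \<chi> (T \<chi> k' h)" unfolding T_def
      by (intro inL_sum inL_mult inL_chi dc) (metis inL_natmult inL_int[OF dc, of 1] mult.right_neutral of_int_1 of_nat_power)
    have A: "dL (2^m) \<chi> (2^m) (of_nat (Suc k') * of_nat h * T \<chi> k' h)"
      using k
    proof
      assume "even k"
      then obtain j where j: "Suc k' = 2 * j" using Suc by (metis evenE)
      have e: "of_nat (Suc k') * of_nat h * T \<chi> k' h = of_nat (2^m) * (of_nat j * T \<chi> k' h)"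
      proof -
        have "Suc k' * h = 2^m * j" using j pm by simp
        hence "(of_nat (Suc k' * h) :: complex) = of_nat (2^m * j)" by simp
        thus ?thesis by (simp add: algebra_simps)
      qed
      show ?thesis unfolding e by (rule dL_inL[OF inL_natmult[OF TL]])
    next
      assume m3: "m \<ge> 3"
      have "dL (2^m) \<chi> 2 (T \<chi> k' h)"
        using dL_add[OF step1[OF _ dc, of k' h] sumchi_half[OF prim m3]] m unfolding h_def by simp
      from dL_scale[OF this, of "Suc k' * h"]
      have "dL (2^m) \<chi> (Suc k' * h * 2) (of_nat (Suc k') * of_nat h * T \<chi> k' h)" by (simp only: of_nat_mult)
      moreover have "(2::nat)^m dvd Suc k' * h * 2" using pm by simp
      ultimately show ?thesis using dL_dvd by blast
    qed
    have "T \<chi> k (2^m) = - (of_nat (Suc k') * of_nat h * T \<chi> k' h + (of_nat h)^2 * Y)"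
      using eq YE unfolding Suc by simp
    thus ?thesis using dL_uminus[OF dL_add[OF A B]] by simp
  qed
qed

lemma p2_all:
  assumes prim: "primitive_char (2^m) \<chi>" and m: "m \<ge> 2" and k: "even k \<or> m \<ge> 3" and n: "n \<ge> m"
  shows "dL (2^m) \<chi> (2^n) (T \<chi> k (2^n))"
  using n
proof (induction n rule: dec_induct)
  case base show ?case by (rule p2_base[OF prim m k])
next
  case (step n)
  have dc: "dirichlet_char (2^m) \<chi>" using prim unfolding primitive_char_def by blast
  define h :: nat where "h = 2^n"
  have pn: "(2::nat)^Suc n = h * 2" unfolding h_def by simp
  have chih: "\<chi> (r + h) = \<chi> r" for r
  proof -
    have e: "h = 2^m * 2^(n-m)" unfolding h_def using step(1)
      by (simp add: power_add[symmetric])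
    show ?thesis unfolding e using chi_add_mult[OF dc, of r "2^(n-m)"] by simp
  qed
  have "T \<chi> k (2^Suc n) = (\<Sum>r<h. \<Sum>s<2. \<chi> (r + h*s) * of_nat (r + h*s) ^ k)"
    unfolding T_def pn by (rule sum_decomp)
  also have "\<dots> = (\<Sum>r<h. \<chi> r * of_nat r ^ k + \<chi> (r + h) * of_nat (r + h) ^ k)"
    by (simp add: numeral_2_eq_2)
  also have "\<dots> = of_nat 2 * T \<chi> k h + (\<Sum>r<h. \<chi> r * ((of_nat (r+h)) ^ k - of_nat r ^ k))"
    unfolding T_def chih by (simp add: sum_distrib_left sum.distrib[symmetric] algebra_simps)
  finally have eq: "T \<chi> k (2^Suc n) = of_nat 2 * T \<chi> k h + (\<Sum>r<h. \<chi> r * ((of_nat (r+h)) ^ k - of_nat r ^ k))" .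
  have A: "dL (2^m) \<chi> (2^Suc n) (of_nat 2 * T \<chi> k h)"
    using dL_scale[OF step(3), of 2] unfolding h_def by simp
  have B: "dL (2^m) \<chi> (2^Suc n) (\<Sum>r<h. \<chi> r * ((of_nat (r+h)) ^ k - of_nat r ^ k))"
  proof (cases k)
    case 0 thus ?thesis using dL_0 by simp
  next
    case (Suc k')
    obtain Y where Y: "inL (2^m) \<chi> Y" and YE: "(\<Sum>r<h. \<chi> r * ((of_nat (r+h)) ^ Suc k' - of_nat r ^ Suc k'))
           = of_nat (Suc k') * of_nat h * T \<chi> k' h + (of_nat h)^2 * Y"
      using p2diff[OF dc] by blast
    have n2: "n \<ge> 2" using step(1) m by simp
    have hh: "(2::nat)^Suc n dvd h^2"
    proof -
      have "h^2 = 2^(2*n)" unfolding h_def by (simp add: power_mult[symmetric] mult.commute)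
      moreover have "Suc n \<le> 2*n" using n2 by simp
      ultimately show ?thesis by (metis le_imp_power_dvd)
    qed
    have B2: "dL (2^m) \<chi> (2^Suc n) ((of_nat h)^2 * Y)"
      using dL_dvd[OF hh dL_inL[OF Y, of "h^2"]] by simp
    have P1: "dL (2^m) \<chi> (2^(n-1)) (T \<chi> k' h)"
      unfolding h_def by (rule part1[of 2 m \<chi> n k']) (use m prim step(1) in auto)
    from dL_scale[OF P1, of "Suc k' * h"]
    have "dL (2^m) \<chi> (Suc k' * h * 2^(n-1)) (of_nat (Suc k') * of_nat h * T \<chi> k' h)" by (simp only: of_nat_mult)
    moreover have "(2::nat)^Suc n dvd Suc k' * h * 2^(n-1)"
    proof -
      have "h * 2^(n-1) = 2^(n + (n-1))" unfolding h_def by (simp add: power_add)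
      moreover have "Suc n \<le> n + (n - 1)" using n2 by simp
      ultimately have "(2::nat)^Suc n dvd h * 2^(n-1)" by (metis le_imp_power_dvd)
      thus ?thesis by (metis dvd_mult mult.assoc)
    qed
    ultimately have B1: "dL (2^m) \<chi> (2^Suc n) (of_nat (Suc k') * of_nat h * T \<chi> k' h)"
      using dL_dvd by blast
    show ?thesis unfolding Suc YE using dL_add[OF B1 B2] .
  qed
  show ?case unfolding eq using dL_add[OF A B] .
qed

lemma dL_alg:
  assumes "dirichlet_char N \<chi>" "N \<ge> 2" "d > 0" "dL N \<chi> d y" shows "alg_cong0 y d"
proof -
  obtain z where z: "inL N \<chi> z" "y = of_nat d * z" using assms(4) unfolding dL_def by blast
  have "y / of_nat d = z" using z(2) assms(3) by simp
  thus ?thesis unfolding alg_cong0_def using inL_alg[OF assms(1,2) z(1)] by simp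
qed

theorem lemma2p4:
  fixes p m :: nat and \<chi> :: "nat \<Rightarrow> complex"
  assumes "prime p" and "m \<ge> 1" and "primitive_char (p ^ m) \<chi>"
  shows "(\<forall>n k. n \<ge> m \<longrightarrow> alg_cong0 (char_power_sum k (p ^ n) \<chi>) (p ^ (n - 1)))
       \<and> (p = 2 \<longrightarrow>
           (\<forall>k. (m \<ge> 3 \<or> (m = 2 \<and> even k) \<or> (m = 1 \<and> odd k)) \<longrightarrow>
             (\<forall>n. n \<ge> max m 2 \<longrightarrow> alg_cong0 (char_power_sum k (2 ^ n) \<chi>) (2 ^ n))))"
proof -
  have dc: "dirichlet_char (p^m) \<chi>" using assms(3) unfolding primitive_char_def by blast
  have p1: "p > 1" using assms(1) prime_gt_1_nat by blast
  have N2: "p^m \<ge> 2"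
  proof -
    have "p^1 \<le> p^m" using assms(2) p1 by (intro power_increasing) auto
    thus ?thesis using p1 by simp
  qed
  have P1: "alg_cong0 (char_power_sum k (p ^ n) \<chi>) (p ^ (n - 1))" if n: "n \<ge> m" for n k
  proof -
    have "char_power_sum k (p^n) \<chi> = T \<chi> k (p^n)" using cps_eq[OF assms(1,2) dc] n assms(2) by simp
    thus ?thesis using dL_alg[OF dc N2 _ part1[OF assms n]] p1 by simp
  qed
  have P2: "alg_cong0 (char_power_sum k (2 ^ n) \<chi>) (2 ^ n)"
    if p2: "p = 2" and k: "m \<ge> 3 \<or> (m = 2 \<and> even k) \<or> (m = 1 \<and> odd k)" and n: "n \<ge> max m 2" for k n
  proof -
    have m2: "m \<ge> 2"
    proof (rule ccontr)
      assume "\<not> m \<ge> 2"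
      hence m1: "m = 1" using assms(2) by simp
      have "\<exists>d. d dvd p^m \<and> d < p^m \<and> (\<forall>a. coprime a (p^m) \<and> [a = 1] (mod d) \<longrightarrow> \<chi> a = 1)"
      proof (intro exI[of _ 1] conjI allI impI)
        fix a assume "coprime a (p^m) \<and> [a = 1] (mod 1)"
        hence "odd a" using p2 m1 by simp
        hence "a mod 2 = 1" by presburger
        thus "\<chi> a = 1" using chi_mod[OF dc, of a] chi_one[OF dc] p2 m1 by simp
      qed (use p2 m1 in auto)
      thus False using assms(3) unfolding primitive_char_def by blast
    qed
    have kk: "even k \<or> m \<ge> 3" using k m2 by auto
    have nm: "n \<ge> m" using n by simp
    have "char_power_sum k (2^n) \<chi> = T \<chi> k (2^n)" using cps_eq[OF assms(1,2) dc, of n k] nm assms(2) p2 by simp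
    thus ?thesis using dL_alg[OF dc[unfolded p2] N2[unfolded p2] _ p2_all[OF assms(3)[unfolded p2] m2 kk nm]] p2 by simp
  qed
  show ?thesis using P1 P2 by blast
qed

end
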